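(* Let $d > 4$ be an integer and let $K$ be the field of fractions of a complete discrete valuation ring $\mathcal{O}$. In the coefficient-choosing game of degree $d$ over $K$, whichever player makes the last move has a winning strategy.
   Context: The coefficient-choosing game of degree $d$ over $K$: Nora and Wanda alternately choose coefficients of $f(x) = a_d x^d + \cdots + a_0$; on each move the current player picks a not-yet-chosen coefficient and assigns it a value in $K$, subject to $a_d \neq 0$, $a_0 \neq 0$. After all $d+1$ coefficients are chosen, Wanda wins if $f$ has a root in $K$, and Nora wins otherwise. Who moves first is fixed in advance, which determines who makes the last move. *)

theory Defs
  imports "HOL-Computational_Algebra.Polynomial"
begin

text \<open>A (normalised) discrete valuation on a field K: a surjective map from
  the nonzero elements onto the integers with v(xy) = v x + v y and
  v(x+y) \<ge> min (v x) (v y) (the value of v at 0 is irrelevant, it stands for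
  infinity). Its valuation ring is O = {x. x = 0 \<or> v x \<ge> 0}, which is a DVR
  with fraction field K, and every DVR with fraction field K arises this way.\<close>

definition discrete_valuation :: "('a::field \<Rightarrow> int) \<Rightarrow> bool" where
  "discrete_valuation v \<longleftrightarrow>
     (\<forall>x y. x \<noteq> 0 \<longrightarrow> y \<noteq> 0 \<longrightarrow> v (x * y) = v x + v y) \<and>
     (\<forall>x y. x \<noteq> 0 \<longrightarrow> y \<noteq> 0 \<longrightarrow> x + y \<noteq> 0 \<longrightarrow> v (x + y) \<ge> min (v x) (v y)) \<and>
     (\<forall>k. \<exists>x. x \<noteq> 0 \<and> v x = k)"

definition valuation_ring :: "('a::field \<Rightarrow> int) \<Rightarrow> 'a set" where
  "valuation_ring v = {x. x = 0 \<or> v x \<ge> 0}"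

definition val_close :: "('a::field \<Rightarrow> int) \<Rightarrow> int \<Rightarrow> 'a \<Rightarrow> 'a \<Rightarrow> bool" where
  "val_close v k x y \<longleftrightarrow> x = y \<or> v (x - y) \<ge> k"

definition val_complete :: "('a::field \<Rightarrow> int) \<Rightarrow> bool" where
  "val_complete v \<longleftrightarrow>
     (\<forall>s :: nat \<Rightarrow> 'a.
        (\<forall>k. \<exists>N. \<forall>m\<ge>N. \<forall>n\<ge>N. val_close v k (s m) (s n)) \<longrightarrow>
        (\<exists>L. \<forall>k. \<exists>N. \<forall>n\<ge>N. val_close v k (s n) L))"

text \<open>K is the field of fractions of a complete discrete valuation ring
  (namely of valuation_ring v).\<close>
definition complete_dvf :: "('a::field \<Rightarrow> int) \<Rightarrow> bool" where
  "complete_dvf v \<longleftrightarrow> discrete_valuation v \<and> val_complete v"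

text \<open>A position is a partial assignment c of coefficients a_0,...,a_d
  (None = not yet chosen). A legal move chooses an unchosen index i \<le> d and a
  value a, with a \<noteq> 0 if i = 0 or i = d.\<close>

definition legal_move :: "nat \<Rightarrow> (nat \<Rightarrow> 'a::zero option) \<Rightarrow> nat \<Rightarrow> 'a \<Rightarrow> bool" where
  "legal_move d c i a \<longleftrightarrow> i \<le> d \<and> c i = None \<and> ((i = 0 \<or> i = d) \<longrightarrow> a \<noteq> 0)"

definition game_poly :: "nat \<Rightarrow> (nat \<Rightarrow> 'a::comm_ring_1 option) \<Rightarrow> 'a poly" where
  "game_poly d c = (\<Sum>i\<le>d. monom (the (c i)) i)"

definition has_root :: "'a::comm_ring_1 poly \<Rightarrow> bool" where
  "has_root f \<longleftrightarrow> (\<exists>x. poly f x = 0)"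

text \<open>Backward induction on the number n of remaining moves; the boolean says
  whether it is Wanda's turn. wanda_wins d n w c: Wanda has a winning
  strategy from position c; nora_wins analogously for Nora.\<close>

fun wanda_wins :: "nat \<Rightarrow> nat \<Rightarrow> bool \<Rightarrow> (nat \<Rightarrow> 'a::field option) \<Rightarrow> bool" where
  "wanda_wins d 0 w c = has_root (game_poly d c)"
| "wanda_wins d (Suc n) w c =
     (if w then (\<exists>i a. legal_move d c i a \<and> wanda_wins d n False (c(i := Some a)))
      else (\<forall>i a. legal_move d c i a \<longrightarrow> wanda_wins d n True (c(i := Some a))))"

fun nora_wins :: "nat \<Rightarrow> nat \<Rightarrow> bool \<Rightarrow> (nat \<Rightarrow> 'a::field option) \<Rightarrow> bool" where
  "nora_wins d 0 w c = (\<not> has_root (game_poly d c))"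
| "nora_wins d (Suc n) w c =
     (if w then (\<forall>i a. legal_move d c i a \<longrightarrow> nora_wins d n False (c(i := Some a)))
      else (\<exists>i a. legal_move d c i a \<and> nora_wins d n True (c(i := Some a))))"

definition wanda_has_winning_strategy :: "'a::field itself \<Rightarrow> nat \<Rightarrow> bool \<Rightarrow> bool" where
  "wanda_has_winning_strategy _ d wanda_first =
     wanda_wins d (Suc d) wanda_first (\<lambda>_. None :: 'a option)"

definition nora_has_winning_strategy :: "'a::field itself \<Rightarrow> nat \<Rightarrow> bool \<Rightarrow> bool" where
  "nora_has_winning_strategy _ d wanda_first =
     nora_wins d (Suc d) wanda_first (\<lambda>_. None :: 'a option)"

text \<open>Moves are numbered 1..d+1; the first player makes the odd-numbered
  moves, so Wanda makes the last move iff (Wanda moves first iff d+1 is odd).\<close>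
definition wanda_moves_last :: "nat \<Rightarrow> bool \<Rightarrow> bool" where
  "wanda_moves_last d wanda_first \<longleftrightarrow> (wanda_first \<longleftrightarrow> odd (Suc d))"

end

theory Submission
  imports Defs
begin


context fixes v :: "'a::field \<Rightarrow> int" assumes dv: "discrete_valuation v"
begin

lemma v_mult: "x \<noteq> 0 \<Longrightarrow> y \<noteq> 0 \<Longrightarrow> v (x*y) = v x + v y"
  using dv unfolding discrete_valuation_def by blast

lemma v_add: "x \<noteq> 0 \<Longrightarrow> y \<noteq> 0 \<Longrightarrow> x + y \<noteq> 0 \<Longrightarrow> v (x + y) \<ge> min (v x) (v y)"
  using dv unfolding discrete_valuation_def by blast

lemma v_surj: "\<exists>x. x \<noteq> 0 \<and> v x = k"
  using dv unfolding discrete_valuation_def by blast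

lemma v_one: "v 1 = 0"
  using v_mult[of 1 1] by simp

lemma v_neg: assumes "x \<noteq> 0" shows "v (-x) = v x"
proof -
  have "v ((-1) * (-1)) = v (-1) + v (-1)" by (rule v_mult) auto
  hence m1: "v (-1) = 0" using v_one by simp
  have "v ((-1) * x) = v (-1) + v x" using assms by (intro v_mult) auto
  thus ?thesis using m1 by simp
qed

lemma v_pow: "x \<noteq> 0 \<Longrightarrow> v (x ^ n) = int n * v x"
  by (induction n) (auto simp: v_one v_mult algebra_simps)

lemma v_sum_gt:
  assumes "finite S" "\<forall>k\<in>S. t k = 0 \<or> v (t k) > V"
  shows "sum t S = 0 \<or> v (sum t S) > V"
  using assms
proof (induction S rule: finite_induct)
  case empty then show ?case by simp
next
  case (insert k S)
  have IH: "sum t S = 0 \<or> v (sum t S) > V" using insert by auto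
  have tk: "t k = 0 \<or> v (t k) > V" using insert by auto
  have e: "sum t (insert k S) = t k + sum t S" using insert by simp
  show ?case
  proof (cases "t k = 0 \<or> sum t S = 0 \<or> t k + sum t S = 0")
    case True then show ?thesis using IH tk e by auto
  next
    case False
    hence "v (t k + sum t S) \<ge> min (v (t k)) (v (sum t S))" by (intro v_add) auto
    then show ?thesis using IH tk e False by auto
  qed
qed

lemma dominant_nonzero:
  assumes "finite S" "m \<in> S" "t m \<noteq> 0"
    "\<forall>k\<in>S. k \<noteq> m \<longrightarrow> t k \<noteq> 0 \<longrightarrow> v (t m) < v (t k)"
  shows "sum t S \<noteq> 0"
proof
  assume s0: "sum t S = 0"
  have e: "sum t S = t m + sum t (S - {m})" using assms by (simp add: sum.remove)
  have "sum t (S - {m}) = 0 \<or> v (sum t (S - {m})) > v (t m)"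
    using assms by (intro v_sum_gt) auto
  moreover have "sum t (S - {m}) = - t m" using s0 e by (simp add: eq_neg_iff_add_eq_0 add.commute)
  ultimately show False using assms(3) v_neg[of "t m"] by auto
qed

lemma infinite_field: "infinite (UNIV :: 'a set)"
proof
  assume "finite (UNIV :: 'a set)"
  hence "finite (range v)" by simp
  moreover have "range v = (UNIV :: int set)" using v_surj by (metis surj_def)
  ultimately show False by simp
qed

end


lemma chord:
  fixes p k q :: int
  assumes "p < k" "k < q" "(q - p) * g > (q - k) * a + (k - p) * b"
  shows "g + k * r > min (a + p * r) (b + q * r)"
proof (rule ccontr)
  let ?m = "min (a + p * r) (b + q * r)"
  assume "\<not> ?thesis"
  hence h: "g + k * r \<le> ?m" by (simp only: not_less)
  have "(q - p) * (g + k * r) \<le> (q - p) * ?m" using h assms by (intro mult_left_mono) auto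
  also have "(q - p) * ?m = (q - k) * ?m + (k - p) * ?m" by (simp add: algebra_simps)
  also have "\<dots> \<le> (q - k) * (a + p * r) + (k - p) * (b + q * r)"
    using assms by (intro add_mono mult_left_mono) auto
  finally have "(q - p) * (g + k * r) \<le> (q - k) * (a + p * r) + (k - p) * (b + q * r)" .
  moreover have "(q - k) * (a + p * r) + (k - p) * (b + q * r) = (q - k) * a + (k - p) * b + (q - p) * (k * r)"
    by (simp add: algebra_simps)
  moreover have "(q - p) * (g + k * r) = (q - p) * g + (q - p) * (k * r)" by (simp add: algebra_simps)
  ultimately show False using assms(3) by linarith
qed

lemma tie:
  fixes p q :: int
  assumes "a + p * r = b + q * r"
  shows "(q - p) dvd (a - b)"
proof -
  have "a - b = (q - p) * r" using assms by (simp add: algebra_simps)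
  thus ?thesis by simp
qed

lemma argmin_ex:
  fixes T :: "nat \<Rightarrow> int"
  assumes "finite S" "S \<noteq> {}"
  obtains m where "m \<in> S" "\<forall>k\<in>S. T m \<le> T k"
proof -
  have "Min (T ` S) \<in> T ` S" using assms by simp
  then obtain m where "m \<in> S" "T m = Min (T ` S)" by auto
  moreover have "\<forall>k\<in>S. Min (T ` S) \<le> T k" using assms by simp
  ultimately show ?thesis using that by auto
qed

lemma two_pt:
  fixes W :: "nat \<Rightarrow> int" and r :: int
  assumes "finite S" "S \<subseteq> {..d}" "0 \<in> S" "d \<in> S" "d > 0"
    "\<not> int d dvd (W 0 - W d)"
    "\<forall>k\<in>S. 0 < k \<and> k < d \<longrightarrow> int d * W k > int (d - k) * W 0 + int k * W d"
  shows "\<exists>m\<in>S. \<forall>k\<in>S. k \<noteq> m \<longrightarrow> W m + int m * r < W k + int k * r"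
proof -
  define T where "T k = W k + int k * r" for k
  obtain m where m: "m \<in> S" "\<forall>k\<in>S. T m \<le> T k"
    using argmin_ex[of S T] assms(1,3) by blast
  have inner: "T k > min (T 0) (T d)" if "k \<in> S" "0 < k" "k < d" for k
  proof -
    have "(int d - 0) * W k > (int d - int k) * W 0 + (int k - 0) * W d"
      using assms(7) that by (simp add: of_nat_diff)
    hence "W k + int k * r > min (W 0 + 0 * r) (W d + int d * r)"
      using that by (intro chord) auto
    thus ?thesis unfolding T_def by simp
  qed
  have mins: "T m \<le> T 0" "T m \<le> T d" using m assms(3,4) by auto
  have "\<forall>k\<in>S. k \<noteq> m \<longrightarrow> T m < T k"
  proof (intro ballI impI, rule ccontr)
    fix k assume k: "k \<in> S" "k \<noteq> m" "\<not> T m < T k"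
    hence eq: "T k = T m" using m by force
    have km: "k \<le> d" "m \<le> d" using k m assms(2) by auto
    show False
    proof (cases "0 < k \<and> k < d")
      case True
      hence "min (T 0) (T d) < T k" using inner k(1) by blast
      thus False using mins eq unfolding min_less_iff_disj by linarith
    next
      case F1: False
      show False
      proof (cases "0 < m \<and> m < d")
        case True
        hence "min (T 0) (T d) < T m" using inner m(1) by blast
        thus False using mins unfolding min_less_iff_disj by linarith
      next
        case False
        hence "(k = 0 \<and> m = d) \<or> (k = d \<and> m = 0)" using F1 km k by auto
        hence "T 0 = T d" using eq by auto
        hence "(int d - 0) dvd (W 0 - W d)" unfolding T_def by (intro tie[where r=r]) (simp add: algebra_simps)
        thus False using assms(6) by simp
      qed
    qed
  qed
  thus ?thesis using m unfolding T_def by blast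
qed

lemma three_pt:
  fixes W :: "nat \<Rightarrow> int" and r :: int
  assumes "finite S" "S \<subseteq> {..d}" "0 \<in> S" "j \<in> S" "d \<in> S" "0 < j" "j < d"
    "\<not> int j dvd (W 0 - W j)" "\<not> int (d - j) dvd (W j - W d)"
    "int d * W j < int (d - j) * W 0 + int j * W d"
    "\<forall>k\<in>S. 0 < k \<and> k < j \<longrightarrow> int j * W k > int (j - k) * W 0 + int k * W j"
    "\<forall>k\<in>S. j < k \<and> k < d \<longrightarrow> int (d - j) * W k > int (d - k) * W j + int (k - j) * W d"
  shows "\<exists>m\<in>S. \<forall>k\<in>S. k \<noteq> m \<longrightarrow> W m + int m * r < W k + int k * r"
proof -
  define T where "T k = W k + int k * r" for k
  obtain m where m: "m \<in> S" "\<forall>k\<in>S. T m \<le> T k"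
    using argmin_ex[of S T] assms(1,3) by blast
  have inner1: "T k > min (T 0) (T j)" if "k \<in> S" "0 < k" "k < j" for k
  proof -
    have "(int j - 0) * W k > (int j - int k) * W 0 + (int k - 0) * W j"
      using assms(11) that by (simp add: of_nat_diff)
    hence "W k + int k * r > min (W 0 + 0 * r) (W j + int j * r)"
      using that by (intro chord) auto
    thus ?thesis unfolding T_def by simp
  qed
  have inner2: "T k > min (T j) (T d)" if "k \<in> S" "j < k" "k < d" for k
  proof -
    have "(int d - int j) * W k > (int d - int k) * W j + (int k - int j) * W d"
      using assms(12) that by (simp add: of_nat_diff)
    hence "W k + int k * r > min (W j + int j * r) (W d + int d * r)"
      using that by (intro chord) auto
    thus ?thesis unfolding T_def by simp
  qed
  have below: "T j < T 0" if "T 0 = T d"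
  proof -
    have "int d * T j = int d * W j + int j * (int d * r)" unfolding T_def by (simp add: algebra_simps)
    also have "\<dots> < int (d - j) * W 0 + int j * W d + int j * (int d * r)" using assms(10) by simp
    also have "\<dots> = int (d - j) * T 0 + int j * T d" unfolding T_def using assms(7)
      by (simp add: of_nat_diff algebra_simps)
    also have "\<dots> = int d * T 0" using that assms(7) by (simp add: of_nat_diff algebra_simps)
    finally have "int d * T j < int d * T 0" .
    thus ?thesis by (simp add: mult_less_cancel_left)
  qed
  have mins: "T m \<le> T 0" "T m \<le> T j" "T m \<le> T d" using m assms(3,4,5) by auto
  have notin: "T m < T k" if k: "k \<in> S" "k \<notin> {0, j, d}" for k
  proof -
    have "k \<le> d" using k assms(2) by auto
    hence "(0 < k \<and> k < j) \<or> (j < k \<and> k < d)" using k by auto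
    thus ?thesis
    proof (elim disjE)
      assume "0 < k \<and> k < j"
      hence "min (T 0) (T j) < T k" using inner1 k(1) by blast
      thus ?thesis using mins unfolding min_less_iff_disj by linarith
    next
      assume "j < k \<and> k < d"
      hence "min (T j) (T d) < T k" using inner2 k(1) by blast
      thus ?thesis using mins unfolding min_less_iff_disj by linarith
    qed
  qed
  have "\<forall>k\<in>S. k \<noteq> m \<longrightarrow> T m < T k"
  proof (intro ballI impI, rule ccontr)
    fix k assume k: "k \<in> S" "k \<noteq> m" "\<not> T m < T k"
    hence eq: "T k = T m" using m by force
    have kin: "k \<in> {0, j, d}" using notin k by blast
    have min_m: "m \<in> {0, j, d}"
    proof (rule ccontr)
      assume "m \<notin> {0, j, d}"
      hence "(0 < m \<and> m < j) \<or> (j < m \<and> m < d)" using m assms(2) by force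
      thus False
      proof (elim disjE)
        assume "0 < m \<and> m < j"
        hence "min (T 0) (T j) < T m" using inner1 m(1) by blast
        thus False using mins unfolding min_less_iff_disj by linarith
      next
        assume "j < m \<and> m < d"
        hence "min (T j) (T d) < T m" using inner2 m(1) by blast
        thus False using mins unfolding min_less_iff_disj by linarith
      qed
    qed
    have t0j: "T 0 \<noteq> T j"
    proof
      assume "T 0 = T j"
      hence "(int j - 0) dvd (W 0 - W j)" unfolding T_def by (intro tie[where r=r]) (simp add: algebra_simps)
      thus False using assms(8) by simp
    qed
    have tjd: "T j \<noteq> T d"
    proof
      assume "T j = T d"
      hence "(int d - int j) dvd (W j - W d)" unfolding T_def by (intro tie[where r=r]) (simp add: algebra_simps)
      thus False using assms(9,7) by (simp add: of_nat_diff)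
    qed
    have "T 0 = T j \<or> T j = T d \<or> (T 0 = T d \<and> T m = T 0)"
      using kin min_m k(2) eq by auto
    thus False using t0j tjd below mins by force
  qed
  thus ?thesis using m unfolding T_def by blast
qed



lemma dvd_small: fixes p :: int assumes "p dvd (x + e)" "p dvd x" "0 < e" "e < p" shows False
proof -
  have "p dvd e" using assms(1,2) by (metis add_diff_cancel_left' dvd_diff)
  thus False using zdvd_imp_le assms(3,4) by fastforce
qed

lemma avoid1:
  fixes p c L :: int assumes "p \<ge> 2"
  shows "\<exists>N>L. \<not> p dvd (c + N)"
proof (cases "p dvd (c + (L + 1))")
  case True
  have "\<not> p dvd (c + (L + 2))"
  proof
    assume "p dvd (c + (L + 2))"
    hence h: "p dvd ((c + (L + 1)) + 1)" by (simp add: algebra_simps)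
    show False using dvd_small[of p "c + (L + 1)" 1, OF h True] assms by simp
  qed
  thus ?thesis by (intro exI[of _ "L + 2"]) simp
next
  case False thus ?thesis by (intro exI[of _ "L + 1"]) simp
qed

lemma avoid2:
  fixes p q a b L :: int assumes "p \<ge> 2" "q \<ge> 3"
  shows "\<exists>N>L. \<not> p dvd (a + N) \<and> \<not> q dvd (b + N)"
proof (cases "p = 2")
  case True
  obtain N0 where N0: "N0 > L" "\<not> p dvd (a + N0)" using avoid1 assms by blast
  have "\<not> p dvd (a + (N0 + 2))"
  proof
    assume "p dvd (a + (N0 + 2))"
    hence "p dvd (a + N0 + p)" using True by (simp add: algebra_simps)
    hence "p dvd (a + N0)" by (metis dvd_add_left_iff dvd_refl)
    thus False using N0 by simp
  qed
  moreover have "\<not> q dvd (b + N0) \<or> \<not> q dvd (b + (N0 + 2))"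
  proof (rule ccontr)
    assume "\<not> ?thesis"
    hence "q dvd ((b + N0) + 2)" "q dvd (b + N0)" by (auto simp: algebra_simps)
    thus False using dvd_small assms by fastforce
  qed
  ultimately show ?thesis using N0 by (metis add.commute add_less_same_cancel1 less_add_same_cancel1 zero_less_numeral order.strict_trans)
next
  case False
  hence p3: "p \<ge> 3" using assms by simp
  have g: "\<not> x dvd (y + e) \<or> \<not> x dvd (y + e')" if "x \<ge> 3" "e < e'" "e' \<le> e + 2" for x y e e' :: int
  proof (rule ccontr)
    assume "\<not> ?thesis"
    hence "x dvd ((y + e) + (e' - e))" "x dvd (y + e)" by auto
    thus False using dvd_small[of x "y + e" "e' - e"] that by linarith
  qed
  have "(\<not> p dvd (a + (L+1)) \<and> \<not> q dvd (b + (L+1))) \<or> (\<not> p dvd (a + (L+2)) \<and> \<not> q dvd (b + (L+2)))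
     \<or> (\<not> p dvd (a + (L+3)) \<and> \<not> q dvd (b + (L+3)))"
    using g[OF p3, of "L+1" "L+2" a] g[OF p3, of "L+1" "L+3" a] g[OF p3, of "L+2" "L+3" a]
      g[OF assms(2), of "L+1" "L+2" b] g[OF assms(2), of "L+1" "L+3" b] g[OF assms(2), of "L+2" "L+3" b]
    by auto
  thus ?thesis by (metis less_add_same_cancel1 zero_less_one add_pos_pos zero_less_numeral)
qed



lemma absmul: fixes w B c D :: int assumes "\<bar>w\<bar> \<le> B" "0 \<le> c" "c \<le> D" shows "\<bar>c * w\<bar> \<le> D * B"
proof -
  have "\<bar>c * w\<bar> = c * \<bar>w\<bar>" using assms by (simp add: abs_mult)
  also have "\<dots> \<le> c * B" using assms by (intro mult_left_mono) auto
  also have "\<dots> \<le> D * B" using assms by (intro mult_right_mono) auto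
  finally show ?thesis .
qed

lemma geN: fixes e N :: int assumes "1 \<le> e" "0 \<le> N" shows "N \<le> e * N"
  using mult_right_mono[OF assms] by simp

lemma cbA: fixes X Y e N P :: int
  assumes "\<bar>X\<bar> \<le> P" "\<bar>Y\<bar> \<le> P" "2 * P < N" "1 \<le> e" shows "e * (- N) + Y < X"
proof -
  have "N \<le> e * N" using assms by (intro geN) auto
  thus ?thesis using assms by simp
qed

lemma cbC: fixes X Y e N P :: int
  assumes "\<bar>X\<bar> \<le> P" "\<bar>Y\<bar> \<le> P" "2 * P < N" "1 \<le> e" shows "e * (- N) < X + Y"
proof -
  have "N \<le> e * N" using assms by (intro geN) auto
  thus ?thesis using assms by simp
qed

context fixes v :: "'a::field \<Rightarrow> int" assumes dv: "discrete_valuation v"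
begin

lemma nora_final:
  fixes b :: "nat \<Rightarrow> 'a" and j d :: nat
  assumes d5: "d \<ge> 5" and jd: "j \<le> d" and j1: "j \<noteq> 1" and jd1: "j \<noteq> d - 1"
    and b0: "j \<noteq> 0 \<Longrightarrow> b 0 \<noteq> 0" and bd: "j \<noteq> d \<Longrightarrow> b d \<noteq> 0"
  shows "\<exists>a. (j = 0 \<or> j = d \<longrightarrow> a \<noteq> 0) \<and>
              (\<forall>x. (\<Sum>i\<le>d. (if i = j then a else b i) * x ^ i) \<noteq> 0)"
proof -
  define w where "w k = v (b k)" for k
  define B where "B = (\<Sum>k\<le>d. \<bar>w k\<bar>)"
  have wB: "\<bar>w k\<bar> \<le> B" if "k \<le> d" for k
    unfolding B_def using that by (intro member_le_sum) auto
  have B0: "0 \<le> B" unfolding B_def by (intro sum_nonneg) auto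
  define L where "L = 2 * int d * B"
  have "\<exists>N>L. (j = 0 \<longrightarrow> \<not> int d dvd (w d + N)) \<and> (j = d \<longrightarrow> \<not> int d dvd (w 0 + N)) \<and>
      (0 < j \<and> j < d \<longrightarrow> \<not> int j dvd (w 0 + N) \<and> \<not> int (d - j) dvd (w d + N))"
  proof (cases "j = 0")
    case True
    then show ?thesis using avoid1[where p="int d" and c="w d" and L=L] d5 by auto
  next
    case False
    show ?thesis
    proof (cases "j = d")
      case True
      then show ?thesis using avoid1[where p="int d" and c="w 0" and L=L] d5 False by auto
    next
      case F2: False
      have j2: "j \<ge> 2" and dj2: "d - j \<ge> 2" using False F2 j1 jd1 jd by auto
      show ?thesis
      proof (cases "j \<ge> 3")
        case True
        obtain N where "N > L" "\<not> int (d - j) dvd (w d + N)" "\<not> int j dvd (w 0 + N)"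
          using avoid2[where p="int (d - j)" and q="int j" and a="w d" and b="w 0" and L=L, OF _ ] True dj2
          by (metis of_nat_le_iff of_nat_numeral)
        thus ?thesis using False F2 by auto
      next
        case False
        hence "j = 2" using j2 by simp
        hence "d - j \<ge> 3" using d5 by simp
        then obtain N where "N > L" "\<not> int j dvd (w 0 + N)" "\<not> int (d - j) dvd (w d + N)"
          using avoid2[where q="int (d - j)" and p="int j" and b="w d" and a="w 0" and L=L] j2 \<open>d - j \<ge> 3\<close>
          by (metis of_nat_le_iff of_nat_numeral)
        thus ?thesis using False F2 by auto
      qed
    qed
  qed
  then obtain N where NL: "N > L" and Nc: "j = 0 \<Longrightarrow> \<not> int d dvd (w d + N)"
    "j = d \<Longrightarrow> \<not> int d dvd (w 0 + N)"
    "0 < j \<Longrightarrow> j < d \<Longrightarrow> \<not> int j dvd (w 0 + N) \<and> \<not> int (d - j) dvd (w d + N)"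
    by blast
  have dB0: "0 \<le> int d * B" using B0 by simp
  have NL': "N > 2 * (int d * B)" using NL unfolding L_def by (simp add: mult.assoc)
  have N0: "N \<ge> 0" using NL' dB0 by linarith
  obtain a where a: "a \<noteq> 0" "v a = - N" using v_surj[OF dv] by blast
  define A where "A i = (if i = j then a else b i)" for i
  define W where "W k = (if k = j then - N else w k)" for k
  have vA: "v (A k) = W k" if "A k \<noteq> 0" for k
    using a unfolding A_def W_def w_def by auto
  have A0: "A 0 \<noteq> 0" and Ad: "A d \<noteq> 0" using a b0 bd unfolding A_def by auto
  have "(\<Sum>i\<le>d. A i * x ^ i) \<noteq> 0" for x
  proof (cases "x = 0")
    case True
    have "(\<Sum>i\<le>d. A i * x ^ i) = (\<Sum>i\<le>d. if i = 0 then A 0 else 0)"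
      using True by (intro sum.cong) auto
    also have "\<dots> = A 0" by simp
    finally show ?thesis using A0 by simp
  next
    case False
    define r where "r = v x"
    define S where "S = {k. k \<le> d \<and> A k \<noteq> 0}"
    have S: "finite S" "S \<subseteq> {..d}" "0 \<in> S" "d \<in> S" using A0 Ad unfolding S_def by auto
    have "\<exists>m\<in>S. \<forall>k\<in>S. k \<noteq> m \<longrightarrow> W m + int m * r < W k + int k * r"
      proof -
      have dpos: "d > 0" using d5 by simp
      have ab: "\<bar>int c * w k\<bar> \<le> int d * B" if "c \<le> d" "k \<le> d" for c k
        using that by (intro absmul[OF wB]) auto
      consider (z) "j = 0" | (e) "j = d" | (mid) "0 < j" "j < d" using jd by linarith
      thus ?thesis
      proof cases
        case z
        show ?thesis
        proof (rule two_pt[OF S dpos])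
          have "W 0 - W d = - (w d + N)" using z d5 by (simp add: W_def)
          thus "\<not> int d dvd (W 0 - W d)" using Nc(1)[OF z] by (metis dvd_minus_iff)
          show "\<forall>k\<in>S. 0 < k \<and> k < d \<longrightarrow> int (d - k) * W 0 + int k * W d < int d * W k"
          proof (intro ballI impI)
            fix k assume k: "k \<in> S" "0 < k \<and> k < d"
            have "int (d - k) * (- N) + int k * w d < int d * w k"
              using ab[of d k] ab[of k d] k NL' by (intro cbA) auto
            thus "int (d - k) * W 0 + int k * W d < int d * W k" using z k by (simp add: W_def)
          qed
        qed
      next
        case e
        show ?thesis
        proof (rule two_pt[OF S dpos])
          have "W 0 - W d = w 0 + N" using e d5 by (simp add: W_def)
          thus "\<not> int d dvd (W 0 - W d)" using Nc(2)[OF e] by simp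
          show "\<forall>k\<in>S. 0 < k \<and> k < d \<longrightarrow> int (d - k) * W 0 + int k * W d < int d * W k"
          proof (intro ballI impI)
            fix k assume k: "k \<in> S" "0 < k \<and> k < d"
            have "int k * (- N) + int (d - k) * w 0 < int d * w k"
              using ab[of d k] ab[of "d - k" 0] k NL' by (intro cbA) auto
            thus "int (d - k) * W 0 + int k * W d < int d * W k" using e k by (simp add: W_def algebra_simps)
          qed
        qed
      next
        case mid
        have jS: "j \<in> S" using a unfolding S_def A_def using jd by auto
        show ?thesis
        proof (rule three_pt[OF S(1,2,3) jS S(4) mid])
          have "W 0 - W j = w 0 + N" using mid by (simp add: W_def)
          thus "\<not> int j dvd (W 0 - W j)" using Nc(3)[OF mid] by simp
          have "W j - W d = - (w d + N)" using mid by (simp add: W_def)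
          thus "\<not> int (d - j) dvd (W j - W d)" using Nc(3)[OF mid] by (metis dvd_minus_iff)
          have "int d * (- N) < int (d - j) * w 0 + int j * w d"
            using ab[of "d - j" 0] ab[of j d] mid NL' by (intro cbC) auto
          thus "int d * W j < int (d - j) * W 0 + int j * W d" using mid by (simp add: W_def)
          show "\<forall>k\<in>S. 0 < k \<and> k < j \<longrightarrow> int (j - k) * W 0 + int k * W j < int j * W k"
          proof (intro ballI impI)
            fix k assume k: "k \<in> S" "0 < k \<and> k < j"
            have "int k * (- N) + int (j - k) * w 0 < int j * w k"
              using ab[of j k] ab[of "j - k" 0] k mid NL' by (intro cbA) auto
            thus "int (j - k) * W 0 + int k * W j < int j * W k" using mid k by (simp add: W_def algebra_simps)
          qed
          show "\<forall>k\<in>S. j < k \<and> k < d \<longrightarrow> int (d - k) * W j + int (k - j) * W d < int (d - j) * W k"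
          proof (intro ballI impI)
            fix k assume k: "k \<in> S" "j < k \<and> k < d"
            have "int (d - k) * (- N) + int (k - j) * w d < int (d - j) * w k"
              using ab[of "d - j" k] ab[of "k - j" d] k mid NL' by (intro cbA) auto
            thus "int (d - k) * W j + int (k - j) * W d < int (d - j) * W k" using mid k by (simp add: W_def)
          qed
        qed
      qed
    qed
    then obtain m where m: "m \<in> S" "\<forall>k\<in>S. k \<noteq> m \<longrightarrow> W m + int m * r < W k + int k * r" by blast
    have vt: "v (A k * x ^ k) = W k + int k * r" if "A k \<noteq> 0" for k
      using that False by (simp add: v_mult[OF dv] v_pow[OF dv] vA r_def)
    show ?thesis
    proof (rule dominant_nonzero[OF dv, of "{..d}" m])
      show "finite {..d}" by simp
      show "m \<in> {..d}" using m S by auto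
      show "A m * x ^ m \<noteq> 0" using m False unfolding S_def by auto
      show "\<forall>k\<in>{..d}. k \<noteq> m \<longrightarrow> A k * x ^ k \<noteq> 0 \<longrightarrow> v (A m * x ^ m) < v (A k * x ^ k)"
      proof (intro ballI impI)
        fix k assume "k \<in> {..d}" "k \<noteq> m" "A k * x ^ k \<noteq> 0"
        hence "k \<in> S" "A k \<noteq> 0" unfolding S_def by auto
        thus "v (A m * x ^ m) < v (A k * x ^ k)" using m vt[of k] vt[of m] \<open>k \<noteq> m\<close>
          unfolding S_def by auto
      qed
    qed
  qed
  thus ?thesis using a unfolding A_def by blast
qed

end


lemma poly_game: "poly (game_poly d c) x = (\<Sum>i\<le>d. the (c i) * x ^ i)"
  by (simp add: game_poly_def poly_sum poly_monom)

lemma free_upd: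
  assumes "legal_move d c i a"
  shows "{k. k \<le> d \<and> (c(i := Some a)) k = None} = {k. k \<le> d \<and> c k = None} - {i}"
    "i \<in> {k. k \<le> d \<and> c k = None}"
  using assms unfolding legal_move_def by auto

lemma card_free_upd:
  assumes "legal_move d c i a" "card {k. k \<le> d \<and> c k = None} = Suc n"
  shows "card {k. k \<le> d \<and> (c(i := Some a)) k = None} = n"
proof -
  have "card {k. k \<le> d \<and> (c(i := Some a)) k = None} = card {k. k \<le> d \<and> c k = None} - 1"
    unfolding free_upd(1)[OF assms(1)] by (rule card_Diff_singleton[OF free_upd(2)[OF assms(1)]])
  thus ?thesis by (simp only: assms(2) diff_Suc_1)
qed

lemma ok_upd:
  assumes "legal_move d c i a" "c 0 \<noteq> Some 0" "c d \<noteq> Some 0"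
  shows "(c(i := Some a)) 0 \<noteq> Some 0" "(c(i := Some a)) d \<noteq> Some 0"
  using assms unfolding legal_move_def by auto

lemma final_pos:
  assumes "card {k. k \<le> d \<and> c k = None} = Suc 0"
  obtains j where "j \<le> d" "c j = None" "\<And>i. i \<le> d \<Longrightarrow> i \<noteq> j \<Longrightarrow> c i \<noteq> None"
proof -
  have "card {k. k \<le> d \<and> c k = None} = 1" using assms by simp
  then obtain j where eq: "{k. k \<le> d \<and> c k = None} = {j}" by (rule card_1_singletonE)
  have "j \<in> {k. k \<le> d \<and> c k = None}" unfolding eq by simp
  hence j: "j \<le> d" "c j = None" by simp_all
  have "i = j" if "i \<le> d" "c i = None" for i
  proof -
    have "i \<in> {k. k \<le> d \<and> c k = None}" using that by simp
    thus ?thesis unfolding eq by simp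
  qed
  thus ?thesis using that j by blast
qed

lemma eval_upd: "(\<Sum>i\<le>d. the ((c(j := Some a)) i) * x ^ i) =
    (\<Sum>i\<le>d. (if i = j then a else the (c i)) * x ^ i)"
  by (intro sum.cong) auto

context fixes v :: "'a::field \<Rightarrow> int" assumes dv: "discrete_valuation v"
begin

lemma wanda_final:
  fixes b :: "nat \<Rightarrow> 'a" and j d :: nat
  assumes "0 < d" "j \<le> d" and b0: "j \<noteq> 0 \<Longrightarrow> b 0 \<noteq> 0" and bd: "j \<noteq> d \<Longrightarrow> b d \<noteq> 0"
  shows "\<exists>a. (j = 0 \<or> j = d \<longrightarrow> a \<noteq> 0) \<and>
              (\<exists>x. (\<Sum>i\<le>d. (if i = j then a else b i) * x ^ i) = 0)"
proof -
  define q where "q = (\<Sum>i\<le>d. monom (if i = j then 0 else b i) i)"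
  have cq: "coeff q n = (if n \<le> d then (if n = j then 0 else b n) else 0)" for n
    unfolding q_def by (simp add: coeff_sum coeff_monom)
  have "q \<noteq> 0"
  proof (cases "j = 0")
    case True
    hence "coeff q d \<noteq> 0" using cq bd assms(1) by simp
    thus ?thesis by auto
  next
    case False
    hence "coeff q 0 \<noteq> 0" using cq b0 by simp
    thus ?thesis by auto
  qed
  hence "finite (insert 0 {x. poly q x = 0})" using poly_roots_finite by blast
  then obtain x where x: "x \<notin> insert 0 {x. poly q x = 0}"
    using ex_new_if_finite[OF infinite_field[OF dv]] by blast
  define a where "a = - poly q x / x ^ j"
  have pq: "poly q x = (\<Sum>i\<le>d. (if i = j then 0 else b i) * x ^ i)"
    unfolding q_def by (simp add: poly_sum poly_monom)
  have "(\<Sum>i\<le>d. (if i = j then a else b i) * x ^ i) =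
        (\<Sum>i\<le>d. (if i = j then 0 else b i) * x ^ i + (if i = j then a * x ^ j else 0))"
    by (intro sum.cong) auto
  also have "\<dots> = poly q x + a * x ^ j" using assms(2) by (simp add: sum.distrib pq)
  also have "\<dots> = 0" using x unfolding a_def by simp
  finally have s0: "(\<Sum>i\<le>d. (if i = j then a else b i) * x ^ i) = 0" .
  have "a \<noteq> 0" using x unfolding a_def by simp
  thus ?thesis using s0 by blast
qed

lemma wanda_last:
  fixes c :: "nat \<Rightarrow> 'a option"
  shows "0 < d \<Longrightarrow> card {k. k \<le> d \<and> c k = None} = Suc n \<Longrightarrow> c 0 \<noteq> Some 0 \<Longrightarrow> c d \<noteq> Some 0 \<Longrightarrow>
   (w \<longleftrightarrow> odd (Suc n)) \<Longrightarrow> wanda_wins d (Suc n) w c"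
proof (induction n arbitrary: c w)
  case 0
  obtain j where j: "j \<le> d" "c j = None" "\<And>i. i \<le> d \<Longrightarrow> i \<noteq> j \<Longrightarrow> c i \<noteq> None"
    using final_pos 0 by metis
  have b0: "the (c 0) \<noteq> 0" if "j \<noteq> 0" using j(3)[of 0] that 0 by (cases "c 0") auto
  have bd: "the (c d) \<noteq> 0" if "j \<noteq> d" using j(3)[of d] that 0 by (cases "c d") auto
  obtain a x where a: "j = 0 \<or> j = d \<longrightarrow> a \<noteq> 0"
    "(\<Sum>i\<le>d. (if i = j then a else the (c i)) * x ^ i) = 0"
    using wanda_final[of d j "\<lambda>i. the (c i)"] 0 j b0 bd by blast
  have "legal_move d c j a" using a j unfolding legal_move_def by auto
  moreover have "has_root (game_poly d (c(j := Some a)))"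
    unfolding has_root_def poly_game eval_upd using a by blast
  ultimately have "\<exists>i a. legal_move d c i a \<and> wanda_wins d 0 False (c(i := Some a))" by (metis wanda_wins.simps(1))
  thus ?case unfolding wanda_wins.simps(2)[of d 0] using 0 by simp
next
  case (Suc n)
  show ?case
  proof (cases w)
    case True
    have "0 < card {k. k \<le> d \<and> c k = None}" using Suc.prems(2) by simp
    hence "{k. k \<le> d \<and> c k = None} \<noteq> {}" by (metis card_gt_0_iff)
    then obtain j where j: "j \<le> d" "c j = None" by auto
    have lm: "legal_move d c j 1" using j unfolding legal_move_def by auto
    have par: "False \<longleftrightarrow> odd (Suc n)" using Suc.prems(5) True by simp
    have "wanda_wins d (Suc n) False (c(j := Some 1))"
      by (rule Suc.IH[OF Suc.prems(1) card_free_upd[OF lm Suc.prems(2)] ok_upd[OF lm Suc.prems(3,4)] par])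
    hence "\<exists>i a. legal_move d c i a \<and> wanda_wins d (Suc n) False (c(i := Some a))" using lm by blast
    thus ?thesis unfolding wanda_wins.simps(2)[of d "Suc n"] using True by (simp only: if_True)
  next
    case False
    have par: "True \<longleftrightarrow> odd (Suc n)" using Suc.prems(5) False by simp
    have "wanda_wins d (Suc n) True (c(i := Some a))" if lm: "legal_move d c i a" for i a
      by (rule Suc.IH[OF Suc.prems(1) card_free_upd[OF lm Suc.prems(2)] ok_upd[OF lm Suc.prems(3,4)] par])
    hence "\<forall>i a. legal_move d c i a \<longrightarrow> wanda_wins d (Suc n) True (c(i := Some a))" by blast
    thus ?thesis unfolding wanda_wins.simps(2)[of d "Suc n"] using False by (simp only: if_False)
  qed
qed

lemma nora_last:
  fixes c :: "nat \<Rightarrow> 'a option"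
  shows "5 \<le> d \<Longrightarrow> card {k. k \<le> d \<and> c k = None} = Suc n \<Longrightarrow> c 0 \<noteq> Some 0 \<Longrightarrow> c d \<noteq> Some 0 \<Longrightarrow>
   (\<not> w \<longleftrightarrow> odd (Suc n)) \<Longrightarrow>
   card ({k. k \<le> d \<and> c k = None} \<inter> {1, d - 1}) + 1 \<le> (if w then Suc n div 2 else Suc (Suc n) div 2) \<Longrightarrow>
   nora_wins d (Suc n) w c"
proof (induction n arbitrary: c w)
  case 0
  obtain j where j: "j \<le> d" "c j = None" "\<And>i. i \<le> d \<Longrightarrow> i \<noteq> j \<Longrightarrow> c i \<noteq> None"
    using final_pos 0 by metis
  have nw: "\<not> w" using 0 by simp
  have "card ({k. k \<le> d \<and> c k = None} \<inter> {1, d - 1}) = 0" using 0 nw by simp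
  hence "{k. k \<le> d \<and> c k = None} \<inter> {1, d - 1} = {}" by simp
  hence j1: "j \<noteq> 1" "j \<noteq> d - 1" using j by auto
  have b0: "the (c 0) \<noteq> 0" if "j \<noteq> 0" using j(3)[of 0] that 0 by (cases "c 0") auto
  have bd: "the (c d) \<noteq> 0" if "j \<noteq> d" using j(3)[of d] that 0 by (cases "c d") auto
  obtain a where a: "j = 0 \<or> j = d \<longrightarrow> a \<noteq> 0"
    "\<forall>x. (\<Sum>i\<le>d. (if i = j then a else the (c i)) * x ^ i) \<noteq> 0"
    using nora_final[OF dv, of d j "\<lambda>i. the (c i)"] 0 j j1 b0 bd by blast
  have "legal_move d c j a" using a j unfolding legal_move_def by auto
  moreover have "\<not> has_root (game_poly d (c(j := Some a)))"
    unfolding has_root_def poly_game eval_upd using a by blast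
  ultimately have "\<exists>i a. legal_move d c i a \<and> nora_wins d 0 True (c(i := Some a))" by (metis nora_wins.simps(1))
  thus ?case unfolding nora_wins.simps(2)[of d 0] using nw by simp
next
  case (Suc n)
  let ?F = "\<lambda>c. {k. k \<le> d \<and> c k = None}"
  show ?case
  proof (cases w)
    case True
    have "nora_wins d (Suc n) False (c(i := Some a))" if lm: "legal_move d c i a" for i a
    proof -
      have "?F (c(i := Some a)) \<inter> {1, d - 1} \<subseteq> ?F c \<inter> {1, d - 1}" using free_upd[OF lm] by auto
      moreover have fin: "finite (?F c \<inter> {1, d - 1})" by simp
      ultimately have "card (?F (c(i := Some a)) \<inter> {1, d - 1}) \<le> card (?F c \<inter> {1, d - 1})"
        using card_mono by blast
      moreover have h6: "card (?F c \<inter> {1, d - 1}) + 1 \<le> Suc (Suc n) div 2"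
        using Suc.prems(6) True by (simp only: if_True)
      ultimately have cnt: "card (?F (c(i := Some a)) \<inter> {1, d - 1}) + 1 \<le> (if False then Suc n div 2 else Suc (Suc n) div 2)"
        unfolding if_False by linarith
      have par: "\<not> False \<longleftrightarrow> odd (Suc n)" using Suc.prems(5) True by simp
      show ?thesis
        by (rule Suc.IH[OF Suc.prems(1) card_free_upd[OF lm Suc.prems(2)] ok_upd[OF lm Suc.prems(3,4)] par cnt])
    qed
    hence "\<forall>i a. legal_move d c i a \<longrightarrow> nora_wins d (Suc n) False (c(i := Some a))" by blast
    thus ?thesis unfolding nora_wins.simps(2)[of d "Suc n"] using True by (simp only: if_True)
  next
    case False
    have nodd: "odd n" using Suc.prems(5) False by simp
    have "\<exists>i. legal_move d c i 1 \<and>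
       card (?F (c(i := Some 1)) \<inter> {1, d - 1}) + 1 \<le> Suc n div 2"
    proof (cases "?F c \<inter> {1, d - 1} = {}")
      case True
      have "0 < card (?F c)" using Suc.prems(2) by simp
      hence "?F c \<noteq> {}" by (metis card_gt_0_iff)
      then obtain j where j: "j \<le> d" "c j = None" by auto
      have lm: "legal_move d c j 1" using j unfolding legal_move_def by auto
      have e: "?F (c(j := Some 1)) \<inter> {1, d - 1} = {}" using free_upd[OF lm] True by auto
      have "card (?F (c(j := Some 1)) \<inter> {1, d - 1}) = 0" by (simp only: e card.empty)
      moreover have "1 \<le> Suc n div 2" using nodd by presburger
      ultimately have "card (?F (c(j := Some 1)) \<inter> {1, d - 1}) + 1 \<le> Suc n div 2" by linarith
      thus ?thesis using lm by blast
    next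
      case F2: False
      then obtain j where j: "j \<in> ?F c \<inter> {1, d - 1}" by blast
      have lm: "legal_move d c j 1" using j Suc.prems(1) unfolding legal_move_def by auto
      have e: "?F (c(j := Some 1)) \<inter> {1, d - 1} = (?F c \<inter> {1, d - 1}) - {j}" using free_upd[OF lm] by auto
      have fin: "finite (?F c \<inter> {1, d - 1})" by simp
      have c1: "card (?F (c(j := Some 1)) \<inter> {1, d - 1}) = card (?F c \<inter> {1, d - 1}) - 1"
        unfolding e by (rule card_Diff_singleton[OF j])
      have pos: "card (?F c \<inter> {1, d - 1}) > 0" using fin j by (metis card_gt_0_iff empty_iff)
      have c6: "card (?F c \<inter> {1, d - 1}) + 1 \<le> Suc (Suc (Suc n)) div 2" using Suc.prems(6) False by simp
      have dv2: "Suc (Suc (Suc n)) div 2 = Suc n div 2 + 1" by simp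
      have "card (?F (c(j := Some 1)) \<inter> {1, d - 1}) + 1 \<le> Suc n div 2" using c1 pos c6 dv2 by linarith
      thus ?thesis using lm by blast
    qed
    then obtain i where lm: "legal_move d c i 1"
      and cnt: "card (?F (c(i := Some 1)) \<inter> {1, d - 1}) + 1 \<le> Suc n div 2" by blast
    have par: "\<not> True \<longleftrightarrow> odd (Suc n)" using nodd by simp
    have cnt': "card (?F (c(i := Some 1)) \<inter> {1, d - 1}) + 1 \<le> (if True then Suc n div 2 else Suc (Suc n) div 2)"
      using cnt by simp
    have "nora_wins d (Suc n) True (c(i := Some 1))"
      by (rule Suc.IH[OF Suc.prems(1) card_free_upd[OF lm Suc.prems(2)] ok_upd[OF lm Suc.prems(3,4)] par cnt'])
    hence "\<exists>i a. legal_move d c i a \<and> nora_wins d (Suc n) True (c(i := Some a))" using lm by blast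
    thus ?thesis unfolding nora_wins.simps(2)[of d "Suc n"] using False by (simp only: if_False)
  qed
qed

end

theorem theorem5:
  fixes v :: "'a::field \<Rightarrow> int" and d :: nat and wanda_first :: bool
  assumes "complete_dvf v" and "d > 4"
  shows "if wanda_moves_last d wanda_first
         then wanda_has_winning_strategy TYPE('a) d wanda_first
         else nora_has_winning_strategy TYPE('a) d wanda_first"
proof -
  have dv: "discrete_valuation v" using assms(1) unfolding complete_dvf_def by simp
  let ?c = "\<lambda>_. None :: 'a option"
  have F: "{k. k \<le> d \<and> ?c k = None} = {..d}" by auto
  have cF: "card {k. k \<le> d \<and> ?c k = None} = Suc d" unfolding F by simp
  show ?thesis
  proof (cases "wanda_moves_last d wanda_first")
    case True
    have "wanda_wins d (Suc d) wanda_first ?c"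
      by (rule wanda_last[OF dv]) (use cF assms True in \<open>auto simp: wanda_moves_last_def\<close>)
    thus ?thesis using True unfolding wanda_has_winning_strategy_def by simp
  next
    case False
    have par: "\<not> wanda_first \<longleftrightarrow> odd (Suc d)" using False unfolding wanda_moves_last_def by auto
    have "{k. k \<le> d \<and> ?c k = None} \<inter> {1, d - 1} = {1, d - 1}" using assms by auto
    moreover have "card {1, d - 1} = (2::nat)" using assms by simp
    moreover have "3 \<le> (if wanda_first then Suc d div 2 else Suc (Suc d) div 2)"
    proof (cases wanda_first)
      case True
      hence "even (Suc d)" using par by simp
      hence "3 \<le> Suc d div 2" using assms(2) by presburger
      thus ?thesis using True by simp
    next
      case False
      hence "odd (Suc d)" using par by simp
      hence "3 \<le> Suc (Suc d) div 2" using assms(2) by presburger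
      thus ?thesis using False by simp
    qed
    ultimately have cnt: "card ({k. k \<le> d \<and> ?c k = None} \<inter> {1, d - 1}) + 1 \<le>
        (if wanda_first then Suc d div 2 else Suc (Suc d) div 2)" by simp
    have "nora_wins d (Suc d) wanda_first ?c"
      by (rule nora_last[OF dv _ cF _ _ par cnt]) (use assms in auto)
    thus ?thesis using False unfolding nora_has_winning_strategy_def by simp
  qed
qed


end
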